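(* Assume: (1) there exists an $\mathcal{A}'$-linear map $\varphi_1:C^1_{\mathrm{CE,der}}(\mathcal{A},\mathcal{B})\to C^0_{\mathrm{CE,der}}(\mathcal{A},\mathcal{B})=\mathcal{B}$ such that every $D$ with $\delta D=0$ satisfies $D=\delta\varphi_1(D)$; and (2) there is an $\mathcal{A}'$-linear map $C^1_{\mathrm{CE,der}}(\mathcal{A}',\mathcal{B})\to\mathrm{Der}(\mathcal{B})$, $D\mapsto D^h$, with $D^h(\phi_0'(a'))=D(a')$ for all $a'\in\mathcal{A}'$. Then there exists $X'\in\lambda\mathrm{Der}(\mathcal{B})[[\lambda]]$ such that $\exp(X')\phi_0'(\mathcal{A}'[[\lambda]])\subseteq C$, i.e. $\sigma(\exp(X')\phi_0'(a'),\Phi(a))=0$ for all $a\in\mathcal{A}$, $a'\in\mathcal{A}'$.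
   Context: $\mathbb{K}$ is a field of characteristic zero. $\mathcal{A},\mathcal{B}$ are commutative $\mathbb{K}$-algebras with Poisson brackets $\pi_0=\{\cdot,\cdot\}_{\mathcal{A}}$, $\sigma_0=\{\cdot,\cdot\}_{\mathcal{B}}$; $\phi_0:\mathcal{A}\to\mathcal{B}$ is a Poisson morphism. $\pi,\sigma$ are formal Poisson deformations of $\pi_0,\sigma_0$ ($\mathbb{K}[[\lambda]]$-bilinear Poisson brackets on $\mathcal{A}[[\lambda]],\mathcal{B}[[\lambda]]$ with these zeroth-order terms), and $\Phi:(\mathcal{A}[[\lambda]],\pi)\to(\mathcal{B}[[\lambda]],\sigma)$ is a $\mathbb{K}[[\lambda]]$-linear Poisson morphism with zeroth-order term $\phi_0$. $\mathcal{A}'$ is the Poisson commutant of $\phi_0(\mathcal{A})$ in $(\mathcal{B},\sigma_0)$ and $\phi_0':\mathcal{A}'\to\mathcal{B}$ the inclusion; $C$ is the commutant of $\Phi(\mathcal{A}[[\lambda]])$ in $(\mathcal{B}[[\lambda]],\sigma)$. $\exp(X')=\sum_n(X')^n/n!$. Chevalley–Eilenberg complex (undeformed brackets): $C^0_{\mathrm{CE}}(\mathcal{A},\mathcal{B})=\mathcal{B}$, $C^k_{\mathrm{CE}}$ = $k$-linear antisymmetric maps $\mathcal{A}^k\to\mathcal{B}$, $(\delta D)(a_0,\dots,a_k)=\sum_j(-1)^j\{\phi_0(a_j),D(\dots,\widehat{a_j},\dots)\}_{\mathcal{B}}+\sum_{i<j}(-1)^{i+j}D(\{a_i,a_j\}_{\mathcal{A}},\dots,\widehat{a_i},\dots,\widehat{a_j},\dots)$;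 in particular $(\delta b)(a)=\{\phi_0(a),b\}_{\mathcal{B}}$ for $b\in\mathcal{B}$. $C^\bullet_{\mathrm{CE,der}}(\mathcal{A},\mathcal{B})$ is the subcomplex of cochains that are derivations along $\phi_0$ in each argument. $C^1_{\mathrm{CE,der}}(\mathcal{A}',\mathcal{B})$ is the space of linear maps $D:\mathcal{A}'\to\mathcal{B}$ with $D(a'_1a'_2)=\phi_0'(a'_1)D(a'_2)+\phi_0'(a'_2)D(a'_1)$. $\mathcal{A}'$ acts on these spaces and on $\mathcal{B}$ by multiplication by $\phi_0'(a')$ in $\mathcal{B}$. *)

theory Defs
  imports "HOL-Computational_Algebra.Formal_Power_Series"
begin

definition k_algebra :: "('k::comm_ring_1 \<Rightarrow> 'a::comm_ring_1 \<Rightarrow> 'a) \<Rightarrow> bool" where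
  "k_algebra sm \<longleftrightarrow>
     (\<forall>c x y. sm c (x + y) = sm c x + sm c y) \<and>
     (\<forall>c d x. sm (c + d) x = sm c x + sm d x) \<and>
     (\<forall>c d x. sm (c * d) x = sm c (sm d x)) \<and>
     (\<forall>x. sm 1 x = x) \<and>
     (\<forall>c x y. sm c (x * y) = sm c x * y)"

definition k_linear ::
  "('k \<Rightarrow> 'a::ab_group_add \<Rightarrow> 'a) \<Rightarrow> ('k \<Rightarrow> 'b::ab_group_add \<Rightarrow> 'b) \<Rightarrow> ('a \<Rightarrow> 'b) \<Rightarrow> bool" where
  "k_linear smA smB f \<longleftrightarrow>
     (\<forall>x y. f (x + y) = f x + f y) \<and> (\<forall>c x. f (smA c x) = smB c (f x))"

definition k_bilinear :: "('k \<Rightarrow> 'a::ab_group_add \<Rightarrow> 'a) \<Rightarrow> ('a \<Rightarrow> 'a \<Rightarrow> 'a) \<Rightarrow> bool" where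
  "k_bilinear sm br \<longleftrightarrow> (\<forall>x. k_linear sm sm (br x)) \<and> (\<forall>y. k_linear sm sm (\<lambda>x. br x y))"

definition poisson_bracket :: "('k \<Rightarrow> 'a::comm_ring_1 \<Rightarrow> 'a) \<Rightarrow> ('a \<Rightarrow> 'a \<Rightarrow> 'a) \<Rightarrow> bool" where
  "poisson_bracket sm br \<longleftrightarrow>
     k_bilinear sm br \<and>
     (\<forall>x y. br x y = - br y x) \<and>
     (\<forall>x y z. br x (br y z) + br y (br z x) + br z (br x y) = 0) \<and>
     (\<forall>x y z. br x (y * z) = br x y * z + y * br x z)"

definition poisson_morphism ::
  "('k \<Rightarrow> 'a::comm_ring_1 \<Rightarrow> 'a) \<Rightarrow> ('k \<Rightarrow> 'b::comm_ring_1 \<Rightarrow> 'b) \<Rightarrow>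
   ('a \<Rightarrow> 'a \<Rightarrow> 'a) \<Rightarrow> ('b \<Rightarrow> 'b \<Rightarrow> 'b) \<Rightarrow> ('a \<Rightarrow> 'b) \<Rightarrow> bool" where
  "poisson_morphism smA smB brA brB f \<longleftrightarrow>
     k_linear smA smB f \<and> f 1 = 1 \<and>
     (\<forall>x y. f (x * y) = f x * f y) \<and>
     (\<forall>x y. f (brA x y) = brB (f x) (f y))"

definition derivation :: "('k \<Rightarrow> 'b::comm_ring_1 \<Rightarrow> 'b) \<Rightarrow> ('b \<Rightarrow> 'b) \<Rightarrow> bool" where
  "derivation sm X \<longleftrightarrow> k_linear sm sm X \<and> (\<forall>x y. X (x * y) = x * X y + y * X x)"

definition fps_sm :: "('k::comm_ring_1 \<Rightarrow> 'a::comm_ring_1 \<Rightarrow> 'a) \<Rightarrow> 'k fps \<Rightarrow> 'a fps \<Rightarrow> 'a fps" where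
  "fps_sm sm c f = Abs_fps (\<lambda>n. \<Sum>i\<le>n. sm (fps_nth c i) (fps_nth f (n - i)))"

definition poisson_commutant :: "('b \<Rightarrow> 'b \<Rightarrow> 'b::zero) \<Rightarrow> ('a \<Rightarrow> 'b) \<Rightarrow> 'b set" where
  "poisson_commutant brB \<phi> = {b. \<forall>a. brB (\<phi> a) b = 0}"

definition CE1_der ::
  "('k \<Rightarrow> 'a::comm_ring_1 \<Rightarrow> 'a) \<Rightarrow> ('k \<Rightarrow> 'b::comm_ring_1 \<Rightarrow> 'b) \<Rightarrow> ('a \<Rightarrow> 'b) \<Rightarrow> ('a \<Rightarrow> 'b) set" where
  "CE1_der smA smB \<phi> = {D. k_linear smA smB D \<and> (\<forall>x y. D (x * y) = \<phi> x * D y + \<phi> y * D x)}"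

text \<open>C^1_{CE,der}(A',B) for a subset A' of B (phi0' the inclusion). A map A' \<rightarrow> B is
  represented by a function on B vanishing outside A' (extensional convention).\<close>
definition CE1_der_sub :: "('k \<Rightarrow> 'b::comm_ring_1 \<Rightarrow> 'b) \<Rightarrow> 'b set \<Rightarrow> ('b \<Rightarrow> 'b) set" where
  "CE1_der_sub smB A' = {D.
     (\<forall>x\<in>A'. \<forall>y\<in>A'. D (x + y) = D x + D y) \<and>
     (\<forall>c. \<forall>x\<in>A'. D (smB c x) = smB c (D x)) \<and>
     (\<forall>x\<in>A'. \<forall>y\<in>A'. D (x * y) = x * D y + y * D x) \<and>
     (\<forall>x. x \<notin> A' \<longrightarrow> D x = 0)}"

definition ce_delta0 :: "('b \<Rightarrow> 'b \<Rightarrow> 'b) \<Rightarrow> ('a \<Rightarrow> 'b) \<Rightarrow> 'b \<Rightarrow> ('a \<Rightarrow> 'b)" where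
  "ce_delta0 brB \<phi> b = (\<lambda>a. brB (\<phi> a) b)"

definition ce_delta1 ::
  "('a \<Rightarrow> 'a \<Rightarrow> 'a) \<Rightarrow> ('b \<Rightarrow> 'b \<Rightarrow> 'b::ab_group_add) \<Rightarrow> ('a \<Rightarrow> 'b) \<Rightarrow> ('a \<Rightarrow> 'b) \<Rightarrow> ('a \<Rightarrow> 'a \<Rightarrow> 'b)" where
  "ce_delta1 brA brB \<phi> D = (\<lambda>a0 a1. brB (\<phi> a0) (D a1) - brB (\<phi> a1) (D a0) - D (brA a0 a1))"

text \<open>Action of a series of operators X = sum_k lambda^k X_k on B[[lambda]].\<close>
definition op_apply :: "(nat \<Rightarrow> 'b::comm_monoid_add \<Rightarrow> 'b) \<Rightarrow> 'b fps \<Rightarrow> 'b fps" where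
  "op_apply X f = Abs_fps (\<lambda>n. \<Sum>k\<le>n. X k (fps_nth f (n - k)))"

text \<open>exp(X') = sum_m X'^m / m!; when X_0 = 0, X'^m raises the lambda-order by m, so
  the lambda^n coefficient only receives contributions from m \<le> n.\<close>
definition op_exp :: "('k::field_char_0 \<Rightarrow> 'b \<Rightarrow> 'b::comm_ring_1) \<Rightarrow> (nat \<Rightarrow> 'b \<Rightarrow> 'b) \<Rightarrow> 'b fps \<Rightarrow> 'b fps" where
  "op_exp sm X f = Abs_fps (\<lambda>n. \<Sum>m\<le>n. sm (1 / fact m) (fps_nth (((op_apply X) ^^ m) f) n))"

end

theory Submission
  imports Defs
begin

notation fps_nth (infixl "\<section>" 75)


lemma ka_zero_left: "k_algebra sm \<Longrightarrow> sm 0 x = 0"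
proof -
  assume "k_algebra sm"
  then have "sm (0 + 0) x = sm 0 x + sm 0 x" unfolding k_algebra_def by blast
  then show ?thesis by simp
qed

lemma ka_zero_right: "k_algebra sm \<Longrightarrow> sm c 0 = 0"
proof -
  assume "k_algebra sm"
  then have "sm c (0 + 0) = sm c 0 + sm c 0" unfolding k_algebra_def by blast
  then show ?thesis by simp
qed

lemma ka_one: "k_algebra sm \<Longrightarrow> sm c x = sm c 1 * x"
  unfolding k_algebra_def by (metis mult_1)

lemma ka_add: "k_algebra sm \<Longrightarrow> sm c (x + y) = sm c x + sm c y"
  unfolding k_algebra_def by blast

lemma ka_hom_mult: "k_algebra sm \<Longrightarrow> sm (c * d) 1 = sm c 1 * sm d 1"
  by (metis ka_one k_algebra_def)

lemma ka_hom_add: "k_algebra sm \<Longrightarrow> sm (c + d) 1 = sm c 1 + sm d 1"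
  unfolding k_algebra_def by blast

lemma ka_hom_1: "k_algebra sm \<Longrightarrow> sm 1 1 = 1"
  unfolding k_algebra_def by blast

lemma ka_hom_of_nat: "k_algebra sm \<Longrightarrow> sm (of_nat n) 1 = of_nat n"
  by (induction n) (simp_all add: ka_zero_left ka_hom_add ka_hom_1)

lemma fps_sm_X_pow:
  assumes "k_algebra sm"
  shows "fps_sm sm (fps_X ^ N) H = fps_X ^ N * H"
proof (rule fps_ext)
  fix n
  have "fps_sm sm (fps_X ^ N) H \<section> n = (\<Sum>i\<le>n. if i = N then H \<section> (n - i) else 0)"
    unfolding fps_sm_def fps_nth_Abs_fps using assms
    by (intro sum.cong refl) (simp add: ka_zero_left k_algebra_def)
  also have "\<dots> = (if n < N then 0 else H \<section> (n - N))"
    by (auto simp: sum.delta)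
  finally show "fps_sm sm (fps_X ^ N) H \<section> n = (fps_X ^ N * H) \<section> n"
    by (simp add: fps_X_power_mult_nth)
qed

lemma fps_sm_const:
  assumes "k_algebra sm"
  shows "fps_sm sm (fps_const c) H = Abs_fps (\<lambda>n. sm c (H \<section> n))"
proof (rule fps_ext)
  fix n
  have "fps_sm sm (fps_const c) H \<section> n = (\<Sum>i\<le>n. if i = 0 then sm c (H \<section> (n - i)) else 0)"
    unfolding fps_sm_def fps_nth_Abs_fps using assms
    by (intro sum.cong refl) (simp add: ka_zero_left)
  then show "fps_sm sm (fps_const c) H \<section> n = Abs_fps (\<lambda>n. sm c (H \<section> n)) \<section> n"
    by (simp add: sum.delta)
qed

lemma fps_sm_const_const:
  assumes "k_algebra sm"
  shows "fps_sm sm (fps_const c) (fps_const a) = fps_const (sm c a)"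
  using assms by (auto intro!: fps_ext simp: fps_sm_const ka_zero_right)

lemma fps_decomp: "(f::'a::comm_ring_1 fps) = fps_X ^ N * fps_shift N f + fps_cutoff N f"
  using fps_shift_cutoff'[of N f] by simp

lemma fps_decomp_low: "(\<And>k. k < N \<Longrightarrow> (f::'a::comm_ring_1 fps) \<section> k = 0) \<Longrightarrow> f = fps_X ^ N * fps_shift N f"
  by (rule fps_ext) (auto simp: fps_X_power_mult_nth)

lemma fps_decomp1: "(f::'a::comm_ring_1 fps) = fps_const (f \<section> 0) + fps_X * fps_shift 1 f"
  by (rule fps_ext) (case_tac n, auto)

locale fbr =
  fixes sm :: "'k::comm_ring_1 \<Rightarrow> 'b::comm_ring_1 \<Rightarrow> 'b" and br :: "'b fps \<Rightarrow> 'b fps \<Rightarrow> 'b fps"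
  assumes ka: "k_algebra sm" and pb: "poisson_bracket (fps_sm sm) br"
begin

lemma add_r: "br F (G + H) = br F G + br F H"
  using pb unfolding poisson_bracket_def k_bilinear_def k_linear_def by blast
lemma add_l: "br (G + H) F = br G F + br H F"
  using pb unfolding poisson_bracket_def k_bilinear_def k_linear_def by blast
lemma sm_r: "br F (fps_sm sm c G) = fps_sm sm c (br F G)"
  using pb unfolding poisson_bracket_def k_bilinear_def k_linear_def by blast
lemma sm_l: "br (fps_sm sm c G) F = fps_sm sm c (br G F)"
  using pb unfolding poisson_bracket_def k_bilinear_def k_linear_def by blast
lemma antisym: "br x y = - br y x"
  using pb unfolding poisson_bracket_def by blast
lemma jacobi: "br x (br y z) + br y (br z x) + br z (br x y) = 0"
  using pb unfolding poisson_bracket_def by blast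
lemma leibniz: "br x (y * z) = br x y * z + y * br x z"
  using pb unfolding poisson_bracket_def by blast
lemma zero_r: "br F 0 = 0"
  using add_r[of F 0 0] by simp
lemma zero_l: "br 0 F = 0"
  using add_l[of 0 0 F] by simp
lemma neg_r: "br F (- G) = - br F G"
  using add_r[of F G "- G"] zero_r by (metis add.inverse_unique add.right_inverse)
lemma neg_l: "br (- G) F = - br G F"
  using add_l[of G "- G" F] zero_l by (metis add.inverse_unique add.right_inverse)
lemma diff_l: "br (G - H) F = br G F - br H F"
  using add_l[of G "- H" F] neg_l by simp
lemma diff_r: "br F (G - H) = br F G - br F H"
  using add_r[of F G "- H"] neg_r by simp
lemma Xp_r: "br F (fps_X ^ N * G) = fps_X ^ N * br F G"
  using sm_r[of F "fps_X ^ N" G] by (simp add: fps_sm_X_pow[OF ka])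
lemma Xp_l: "br (fps_X ^ N * G) F = fps_X ^ N * br G F"
  using sm_l[of "fps_X ^ N" G F] by (simp add: fps_sm_X_pow[OF ka])
lemma X_r: "br F (fps_X * G) = fps_X * br F G"
  using Xp_r[of F 1 G] by simp
lemma X_l: "br (fps_X * G) F = fps_X * br G F"
  using Xp_l[of 1 G F] by simp

lemma nth0: "br G H \<section> 0 = br (fps_const (G \<section> 0)) (fps_const (H \<section> 0)) \<section> 0"
proof -
  have "br G H = br (fps_const (G \<section> 0) + fps_X * fps_shift 1 G) (fps_const (H \<section> 0) + fps_X * fps_shift 1 H)"
    using fps_decomp1[of G] fps_decomp1[of H] by simp
  then show ?thesis by (simp add: add_l add_r X_l X_r)
qed

lemma cong_l:
  assumes "\<And>k. k < N \<Longrightarrow> F \<section> k = F' \<section> k" "k < N"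
  shows "br F G \<section> k = br F' G \<section> k"
proof -
  have "F - F' = fps_X ^ N * fps_shift N (F - F')"
    by (rule fps_decomp_low) (use assms in auto)
  then have "br F G - br F' G = fps_X ^ N * br (fps_shift N (F - F')) G"
    by (metis diff_l Xp_l)
  then have "(br F G - br F' G) \<section> k = 0" using assms(2) by (simp add: fps_X_power_mult_nth)
  then show ?thesis by simp
qed

lemma cong_r:
  assumes "\<And>k. k < N \<Longrightarrow> F \<section> k = F' \<section> k" "k < N"
  shows "br G F \<section> k = br G F' \<section> k"
  using cong_l[OF assms, of G] antisym[of G F] antisym[of G F'] by simp

end



lemma op_apply_nth: "op_apply X f \<section> n = (\<Sum>k\<le>n. X k (f \<section> (n - k)))"
  unfolding op_apply_def by simp

lemma op_exp_nth: "op_exp sm X f \<section> n = (\<Sum>m\<le>n. sm (1 / fact m) (((op_apply X) ^^ m) f \<section> n))"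
  unfolding op_exp_def by simp

lemma D_low:
  assumes X0: "X 0 = (\<lambda>_. 0)" and Xz: "\<And>k. X k 0 = 0"
  shows "k < m \<Longrightarrow> ((op_apply X) ^^ m) f \<section> k = 0"
proof (induction m arbitrary: k)
  case 0 then show ?case by simp
next
  case (Suc m)
  have "X j (((op_apply X) ^^ m) f \<section> (k - j)) = 0" if "j \<le> k" for j
  proof (cases "j = 0")
    case True then show ?thesis using X0 by simp
  next
    case False
    then have "k - j < m" using Suc.prems that by linarith
    then show ?thesis using Suc.IH Xz by simp
  qed
  then show ?case by (simp add: op_apply_nth)
qed

lemma D_loc:
  assumes "\<And>j. j \<le> N \<Longrightarrow> X j = Y j"
  shows "k \<le> N \<Longrightarrow> ((op_apply X) ^^ m) f \<section> k = ((op_apply Y) ^^ m) f \<section> k"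
proof (induction m arbitrary: k)
  case 0 then show ?case by simp
next
  case (Suc m)
  then show ?case using assms by (simp add: op_apply_nth)
qed

lemma E_loc:
  assumes "\<And>j. j \<le> N \<Longrightarrow> X j = Y j" "k \<le> N"
  shows "op_exp sm X f \<section> k = op_exp sm Y f \<section> k"
  using D_loc[OF assms(1) assms(2)] by (simp add: op_exp_nth)

lemma D_inc:
  assumes X0: "X 0 = (\<lambda>_. 0)" and Xz: "\<And>k. X k 0 = 0"
    and Y0: "Y 0 = (\<lambda>_. 0)" and Yz: "\<And>k. Y k 0 = 0"
    and agree: "\<And>j. j < N \<Longrightarrow> X j = Y j" and m2: "2 \<le> m"
  shows "((op_apply Y) ^^ m) f \<section> N = ((op_apply X) ^^ m) f \<section> N"
proof -
  obtain m' where m': "m = Suc m'" "1 \<le> m'" using m2 by (cases m) auto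
  have "Y j (((op_apply Y) ^^ m') f \<section> (N - j)) = X j (((op_apply X) ^^ m') f \<section> (N - j))"
    if "j \<le> N" for j
  proof (cases "j = 0")
    case True then show ?thesis using X0 Y0 by simp
  next
    case False
    show ?thesis
    proof (cases "j = N")
      case True
      then show ?thesis using D_low[where X=X, OF X0 Xz, of 0 m'] D_low[where X=Y, OF Y0 Yz, of 0 m'] m' Xz Yz by simp
    next
      case False
      then have "j < N" using that by simp
      moreover have "((op_apply Y) ^^ m') f \<section> (N - j) = ((op_apply X) ^^ m') f \<section> (N - j)"
        by (rule D_loc[of "N - 1"]) (use agree \<open>j \<noteq> 0\<close> \<open>j < N\<close> in auto)
      ultimately show ?thesis using agree by simp
    qed
  qed
  then show ?thesis using m' by (simp add: op_apply_nth)
qed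

lemma D1_inc:
  fixes X :: "nat \<Rightarrow> 'b::ab_group_add \<Rightarrow> 'b"
  assumes agree: "\<And>j. j < N \<Longrightarrow> X j = Y j"
  shows "op_apply Y f \<section> N = op_apply X f \<section> N - X N (f \<section> 0) + Y N (f \<section> 0)"
proof -
  have "op_apply Y f \<section> N = (\<Sum>k<N. Y k (f \<section> (N - k))) + Y N (f \<section> 0)"
    by (simp add: op_apply_nth lessThan_Suc_atMost[symmetric])
  moreover have "op_apply X f \<section> N = (\<Sum>k<N. X k (f \<section> (N - k))) + X N (f \<section> 0)"
    by (simp add: op_apply_nth lessThan_Suc_atMost[symmetric])
  moreover have "(\<Sum>k<N. Y k (f \<section> (N - k))) = (\<Sum>k<N. X k (f \<section> (N - k)))"
    using agree by simp
  ultimately show ?thesis by simp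
qed

lemma E_inc:
  fixes X :: "nat \<Rightarrow> 'b::comm_ring_1 \<Rightarrow> 'b"
  assumes ka: "k_algebra sm" 
    and X0: "X 0 = (\<lambda>_. 0)" and Xz: "\<And>k. X k 0 = 0"
    and Y0: "Y 0 = (\<lambda>_. 0)" and Yz: "\<And>k. Y k 0 = 0"
    and agree: "\<And>j. j < N \<Longrightarrow> X j = Y j" and N1: "1 \<le> N"
  shows "op_exp sm Y f \<section> N = op_exp sm X f \<section> N - X N (f \<section> 0) + Y N (f \<section> 0)"
proof -
  let ?t = "\<lambda>X m. sm (1 / fact m) (((op_apply X) ^^ m) f \<section> N)"
  have split: "(\<Sum>m\<le>N. ?t Z m) = ?t Z 1 + (\<Sum>m\<in>{..N} - {1}. ?t Z m)" for Z
    using N1 by (subst sum.remove[of _ 1]) auto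
  have rest: "(\<Sum>m\<in>{..N} - {1}. ?t Y m) = (\<Sum>m\<in>{..N} - {1}. ?t X m)"
  proof (rule sum.cong[OF refl])
    fix m assume "m \<in> {..N} - {1}"
    then have "m = 0 \<or> 2 \<le> m" by auto
    then show "?t Y m = ?t X m"
      using D_inc[where X=X and Y=Y, OF X0 Xz Y0 Yz agree] by auto
  qed
  have sm1: "sm 1 x = x" for x using ka unfolding k_algebra_def by blast
  have one: "?t Y 1 = ?t X 1 - X N (f \<section> 0) + Y N (f \<section> 0)"
    using D1_inc[where X=X and Y=Y and f=f, OF agree] by (simp add: sm1)
  show ?thesis
    unfolding op_exp_nth split[of Y] split[of X] rest one by simp
qed

lemma E_0: "k_algebra sm \<Longrightarrow> op_exp sm X f \<section> 0 = f \<section> 0"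
  by (simp add: op_exp_nth k_algebra_def)

locale addseq =
  fixes X :: "nat \<Rightarrow> 'b::comm_ring_1 \<Rightarrow> 'b"
  assumes X0: "X 0 = (\<lambda>_. 0)" and Xadd: "\<And>k x y. X k (x + y) = X k x + X k y"
begin

lemma Xz: "X k 0 = 0"
  using Xadd[of k 0 0] by simp

lemma Xsum: "X k (sum g A) = (\<Sum>a\<in>A. X k (g a))"
  by (induction A rule: infinite_finite_induct) (simp_all add: Xz Xadd)

lemma D_add: "op_apply X (f + g) = op_apply X f + op_apply X g"
  by (rule fps_ext) (simp add: op_apply_nth Xadd sum.distrib)

lemma Dm_add: "((op_apply X) ^^ m) (f + g) = ((op_apply X) ^^ m) f + ((op_apply X) ^^ m) g"
  by (induction m) (simp_all add: D_add)

lemma D_X: "op_apply X (fps_X * f) = fps_X * op_apply X f"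
proof (rule fps_ext)
  fix n show "op_apply X (fps_X * f) \<section> n = (fps_X * op_apply X f) \<section> n"
  proof (cases n)
    case 0 then show ?thesis by (simp add: op_apply_nth X0)
  next
    case (Suc n')
    have "op_apply X (fps_X * f) \<section> n = (\<Sum>k\<le>n'. X k (f \<section> (n' - k))) + X (Suc n') 0"
      unfolding Suc op_apply_nth sum.atMost_Suc
      by (intro arg_cong2[where f="(+)"] sum.cong refl) (auto simp: Suc_diff_le)
    then show ?thesis by (simp add: Suc Xz op_apply_nth)
  qed
qed

lemma Dm_X: "((op_apply X) ^^ m) (fps_X * f) = fps_X * ((op_apply X) ^^ m) f"
  by (induction m) (simp_all add: D_X)

lemma E_add: "k_algebra sm \<Longrightarrow> op_exp sm X (f + g) = op_exp sm X f + op_exp sm X g"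
  by (rule fps_ext) (simp add: op_exp_nth Dm_add ka_add sum.distrib)

lemma E_X:
  assumes ka: "k_algebra sm"
  shows "op_exp sm X (fps_X * f) = fps_X * op_exp sm X f"
proof (rule fps_ext)
  fix n show "op_exp sm X (fps_X * f) \<section> n = (fps_X * op_exp sm X f) \<section> n"
  proof (cases n)
    case 0 then show ?thesis by (simp add: op_exp_nth Dm_X ka_zero_right[OF ka])
  next
    case (Suc n')
    have "((op_apply X) ^^ Suc n') f \<section> n' = 0" by (rule D_low[where X=X, OF X0 Xz]) simp
    then show ?thesis
      by (simp add: Suc op_exp_nth Dm_X ka_zero_right[OF ka])
  qed
qed

end



lemma tri_swap:
  fixes h :: "nat \<Rightarrow> nat \<Rightarrow> 'r::comm_monoid_add"
  shows "(\<Sum>k\<le>n. \<Sum>i\<le>n-k. h k i) = (\<Sum>i\<le>n. \<Sum>k\<le>n-i. h k i)"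
proof -
  have e1: "{..n-k} = {y. y \<in> {..n} \<and> k + y \<le> n}" if "k \<le> n" for k using that by auto
  have e2: "{..n-i} = {x. x \<in> {..n} \<and> x + i \<le> n}" if "i \<le> n" for i using that by auto
  have "(\<Sum>k\<le>n. \<Sum>i\<le>n-k. h k i) = (\<Sum>k\<le>n. \<Sum>i\<in>{y. y \<in> {..n} \<and> k + y \<le> n}. h k i)"
    by (intro sum.cong refl) (simp add: e1)
  also have "\<dots> = (\<Sum>i\<le>n. \<Sum>k\<in>{x. x \<in> {..n} \<and> x + i \<le> n}. h k i)"
    by (rule sum.swap_restrict) auto
  also have "\<dots> = (\<Sum>i\<le>n. \<Sum>k\<le>n-i. h k i)"
    by (intro sum.cong refl) (simp add: e2)
  finally show ?thesis .
qed

lemma sum_rev_atMost: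
  fixes g :: "nat \<Rightarrow> 'r::comm_monoid_add"
  shows "(\<Sum>i\<le>m. g (m - i)) = (\<Sum>i\<le>m. g i)"
  using sum.atLeastAtMost_rev[of g 0 m] by (simp add: atMost_atLeast0)

lemma binom_step:
  fixes A B :: "nat \<Rightarrow> 'r::comm_semiring_1"
  shows "(\<Sum>i\<le>m. of_nat (m choose i) * (A (Suc i) * B (m - i))) +
         (\<Sum>i\<le>m. of_nat (m choose i) * (A i * B (Suc m - i))) =
         (\<Sum>i\<le>Suc m. of_nat (Suc m choose i) * (A i * B (Suc m - i)))"
proof -
  have s2: "(\<Sum>i\<le>m. of_nat (m choose i) * (A i * B (Suc m - i))) =
        (\<Sum>i\<le>Suc m. of_nat (m choose i) * (A i * B (Suc m - i)))"
    by (simp add: binomial_eq_0)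
  show ?thesis
    unfolding s2 sum.atMost_Suc_shift[of _ m]
    by (simp add: sum.distrib distrib_right add_ac)
qed

lemma mult_nth_low:
  fixes A B :: "'r::comm_ring_1 fps"
  assumes "\<And>p. p < i \<Longrightarrow> A \<section> p = 0" "\<And>q. q < j \<Longrightarrow> B \<section> q = 0" "n < i + j"
  shows "(A * B) \<section> n = 0"
proof -
  have "A \<section> p * B \<section> (n - p) = 0" if "p \<in> {0..n}" for p
  proof (cases "p < i")
    case True then show ?thesis using assms by simp
  next
    case False then have "n - p < j" using assms(3) that by auto
    then show ?thesis using assms by simp
  qed
  then show ?thesis by (simp add: fps_mult_nth)
qed

locale derseq = addseq +
  assumes Xmul: "\<And>k x y. X k (x * y) = x * X k y + y * X k x"
begin

lemma D_leib: "op_apply X (f * g) = f * op_apply X g + g * op_apply X f"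
proof (rule fps_ext)
  fix n
  have "op_apply X (f * g) \<section> n =
     (\<Sum>k\<le>n. \<Sum>i\<le>n-k. f \<section> i * X k (g \<section> (n - k - i))) +
     (\<Sum>k\<le>n. \<Sum>i\<le>n-k. g \<section> (n - k - i) * X k (f \<section> i))"
    by (simp add: op_apply_nth fps_mult_nth atMost_atLeast0[symmetric] Xsum Xmul sum.distrib)
  moreover have "(f * op_apply X g) \<section> n = (\<Sum>k\<le>n. \<Sum>i\<le>n-k. f \<section> i * X k (g \<section> (n - k - i)))"
  proof -
    have "(f * op_apply X g) \<section> n = (\<Sum>i\<le>n. \<Sum>k\<le>n-i. f \<section> i * X k (g \<section> (n - i - k)))"
      by (simp add: op_apply_nth fps_mult_nth atMost_atLeast0[symmetric] sum_distrib_left)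
    also have "\<dots> = (\<Sum>k\<le>n. \<Sum>i\<le>n-k. f \<section> i * X k (g \<section> (n - i - k)))"
      by (rule tri_swap[symmetric])
    finally show ?thesis by (simp add: add.commute)
  qed
  moreover have "(g * op_apply X f) \<section> n = (\<Sum>k\<le>n. \<Sum>i\<le>n-k. g \<section> (n - k - i) * X k (f \<section> i))"
  proof -
    have "(g * op_apply X f) \<section> n = (\<Sum>j\<le>n. \<Sum>k\<le>n-j. g \<section> j * X k (f \<section> (n - j - k)))"
      by (simp add: op_apply_nth fps_mult_nth atMost_atLeast0[symmetric] sum_distrib_left)
    also have "\<dots> = (\<Sum>k\<le>n. \<Sum>j\<le>n-k. g \<section> j * X k (f \<section> (n - j - k)))"
      by (rule tri_swap[symmetric])
    also have "\<dots> = (\<Sum>k\<le>n. \<Sum>i\<le>n-k. g \<section> (n - k - i) * X k (f \<section> i))"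
    proof (rule sum.cong[OF refl])
      fix k assume "k \<in> {..n}"
      have "(\<Sum>j\<le>n-k. g \<section> j * X k (f \<section> (n - j - k))) =
            (\<Sum>i\<le>n-k. g \<section> (n - k - i) * X k (f \<section> (n - (n - k - i) - k)))"
        using sum_rev_atMost[of "\<lambda>j. g \<section> j * X k (f \<section> (n - j - k))" "n - k"] by simp
      also have "\<dots> = (\<Sum>i\<le>n-k. g \<section> (n - k - i) * X k (f \<section> i))"
        using \<open>k \<in> {..n}\<close> by (intro sum.cong refl) auto
      finally show "(\<Sum>j\<le>n-k. g \<section> j * X k (f \<section> (n - j - k))) =
            (\<Sum>i\<le>n-k. g \<section> (n - k - i) * X k (f \<section> i))" .
    qed
    finally show ?thesis .
  qed
  ultimately show "op_apply X (f * g) \<section> n = (f * op_apply X g + g * op_apply X f) \<section> n"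
    by simp
qed

lemma D_zero: "op_apply X 0 = 0"
  using D_add[of 0 0] by simp

lemma D_sum: "op_apply X (sum g A) = (\<Sum>a\<in>A. op_apply X (g a))"
  by (induction A rule: infinite_finite_induct) (simp_all add: D_zero D_add)

lemma D_of_nat: "op_apply X (of_nat c * h) = of_nat c * op_apply X h"
  by (induction c) (simp_all add: D_zero D_add distrib_right)

lemma Dm_leib:
  "((op_apply X) ^^ m) (f * g) =
     (\<Sum>i\<le>m. of_nat (m choose i) * (((op_apply X) ^^ i) f * ((op_apply X) ^^ (m - i)) g))"
proof (induction m)
  case 0 then show ?case by simp
next
  case (Suc m)
  let ?A = "\<lambda>i. ((op_apply X) ^^ i) f" and ?B = "\<lambda>i. ((op_apply X) ^^ i) g"
  have "((op_apply X) ^^ Suc m) (f * g) =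
      op_apply X (\<Sum>i\<le>m. of_nat (m choose i) * (?A i * ?B (m - i)))"
    by (simp add: Suc)
  also have "\<dots> = (\<Sum>i\<le>m. of_nat (m choose i) * op_apply X (?A i * ?B (m - i)))"
    by (simp only: D_sum D_of_nat)
  also have "\<dots> =
      (\<Sum>i\<le>m. of_nat (m choose i) * (?A i * ?B (Suc m - i) + ?B (m - i) * ?A (Suc i)))"
    by (intro sum.cong refl) (simp add: D_leib Suc_diff_le)
  also have "\<dots> = (\<Sum>i\<le>m. of_nat (m choose i) * (?A (Suc i) * ?B (m - i))) +
         (\<Sum>i\<le>m. of_nat (m choose i) * (?A i * ?B (Suc m - i)))"
    by (simp add: sum.distrib distrib_left mult.commute)
  also have "\<dots> = (\<Sum>i\<le>Suc m. of_nat (Suc m choose i) * (?A i * ?B (Suc m - i)))"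
    by (rule binom_step)
  finally show ?case .
qed

end



lemma coef_ident:
  fixes sm :: "'k::field_char_0 \<Rightarrow> 'b::comm_ring_1 \<Rightarrow> 'b"
  assumes ka: "k_algebra sm" and "i \<le> m"
  shows "sm (1 / fact m) 1 * of_nat (m choose i) = sm (1 / fact i) 1 * sm (1 / fact (m - i)) 1"
proof -
  have "(1 / fact m :: 'k::field_char_0) * of_nat (m choose i) = (1 / fact i) * (1 / fact (m - i))"
    using assms(2) by (simp add: binomial_fact field_simps)
  then have "sm ((1 / fact m) * of_nat (m choose i)) 1 = sm ((1 / fact i) * (1 / fact (m - i))) 1"
    by (simp only:)
  then show ?thesis by (simp only: ka_hom_mult[OF ka] ka_hom_of_nat[OF ka])
qed

context derseq begin

lemma E_mult:
  assumes ka: "k_algebra sm"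
  shows "op_exp sm X (f * g) = op_exp sm X f * op_exp sm X g"
proof (rule fps_ext)
  fix n
  define c where "c m = sm (1 / fact m) 1" for m
  let ?A = "\<lambda>i. ((op_apply X) ^^ i) f" and ?B = "\<lambda>i. ((op_apply X) ^^ i) g"
  define S where "S h = (\<Sum>m\<le>n. fps_const (c m) * ((op_apply X) ^^ m) h)" for h
  have Enth: "op_exp sm X h \<section> p = (\<Sum>m\<le>p. c m * (((op_apply X) ^^ m) h \<section> p))" for h p
    unfolding op_exp_nth c_def by (subst ka_one[OF ka]) simp
  have Snth: "S h \<section> p = op_exp sm X h \<section> p" if "p \<le> n" for h p
  proof -
    have "S h \<section> p = (\<Sum>m\<le>n. c m * (((op_apply X) ^^ m) h \<section> p))"
      unfolding S_def fps_sum_nth by simp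
    also have "\<dots> = (\<Sum>m\<le>p. c m * (((op_apply X) ^^ m) h \<section> p))"
      by (rule sum.mono_neutral_right) (use that D_low[where X=X, OF X0 Xz] in auto)
    finally show ?thesis by (simp add: Enth)
  qed
  define G where "G i j = c i * c j * (?A i * ?B j) \<section> n" for i j
  have Gz: "G i j = 0" if "n < i + j" for i j
    unfolding G_def using mult_nth_low[of i "?A i" j "?B j" n] D_low[where X=X, OF X0 Xz] that by simp
  have "(op_exp sm X f * op_exp sm X g) \<section> n = (S f * S g) \<section> n"
    by (simp add: fps_mult_nth Snth)
  also have "\<dots> = (\<Sum>i\<le>n. \<Sum>j\<le>n. G i j)"
    unfolding S_def sum_product G_def fps_sum_nth by (simp add: mult_ac)
  also have "\<dots> = (\<Sum>(i,j)\<in>{..n} \<times> {..n}. G i j)"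
    by (simp add: sum.cartesian_product)
  also have "\<dots> = (\<Sum>(i,j)\<in>{(i,j). i + j \<le> n}. G i j)"
    by (rule sum.mono_neutral_right) (auto, meson Gz not_le)
  also have "\<dots> = (\<Sum>m\<le>n. \<Sum>i\<le>m. G i (m - i))"
    by (rule sum.triangle_reindex_eq)
  also have "\<dots> = op_exp sm X (f * g) \<section> n"
  proof -
    have "op_exp sm X (f * g) \<section> n = (\<Sum>m\<le>n. c m * (\<Sum>i\<le>m. of_nat (m choose i) * ((?A i * ?B (m - i)) \<section> n)))"
      unfolding Enth Dm_leib fps_sum_nth by (simp add: fps_of_nat[symmetric])
    also have "\<dots> = (\<Sum>m\<le>n. \<Sum>i\<le>m. G i (m - i))"
      unfolding sum_distrib_left G_def
      by (intro sum.cong refl) (simp add: mult.assoc[symmetric] coef_ident[OF ka] c_def)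
    finally show ?thesis by simp
  qed
  finally show "op_exp sm X (f * g) \<section> n = (op_exp sm X f * op_exp sm X g) \<section> n" by simp
qed

end



lemma low_mult_l:
  fixes P H :: "'r::comm_ring_1 fps"
  assumes "\<And>k. k \<le> n \<Longrightarrow> P \<section> k = 0"
  shows "(P * H) \<section> Suc n = P \<section> Suc n * H \<section> 0"
proof -
  have "(P * H) \<section> Suc n = (\<Sum>i\<in>{Suc n}. P \<section> i * H \<section> (Suc n - i))"
    unfolding fps_mult_nth
    by (rule sum.mono_neutral_right) (use assms in auto)
  then show ?thesis by simp
qed

lemma low_mult_r:
  fixes P H :: "'r::comm_ring_1 fps"
  assumes "\<And>k. k \<le> n \<Longrightarrow> P \<section> k = 0"
  shows "(H * P) \<section> Suc n = H \<section> 0 * P \<section> Suc n"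
  using low_mult_l[where H=H, OF assms] by (simp add: mult.commute)

lemma derivation_zero: "k_algebra sm \<Longrightarrow> derivation sm (\<lambda>_. 0)"
  unfolding derivation_def k_linear_def by (simp add: ka_zero_right)

lemma derivation_add: "derivation sm D \<Longrightarrow> D (x + y) = D x + D y"
  unfolding derivation_def k_linear_def by blast

lemma derivation_mult: "derivation sm D \<Longrightarrow> D (x * y) = x * D y + y * D x"
  unfolding derivation_def by blast

lemma derivation_sm: "derivation sm D \<Longrightarrow> D (sm c x) = sm c (D x)"
  unfolding derivation_def k_linear_def by blast

lemma derivation_one: "derivation sm D \<Longrightarrow> D 1 = 0"
  using derivation_mult[of sm D 1 1] by simp

lemma derivation_scal1: "k_algebra sm \<Longrightarrow> derivation sm D \<Longrightarrow> D (sm c 1) = 0"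
  using derivation_sm[of sm D c 1] derivation_one[of sm D] by (simp add: ka_zero_right)

lemma derseq_intro:
  assumes "X 0 = (\<lambda>_. 0)" "\<And>k. derivation sm (X k)"
  shows "derseq X"
  unfolding derseq_def derseq_axioms_def addseq_def
  using assms derivation_add derivation_mult by metis

locale mainctx =
  fixes smA :: "'k::field_char_0 \<Rightarrow> 'a::comm_ring_1 \<Rightarrow> 'a"
    and smB :: "'k \<Rightarrow> 'b::comm_ring_1 \<Rightarrow> 'b"
    and pi0 :: "'a \<Rightarrow> 'a \<Rightarrow> 'a" and sig0 :: "'b \<Rightarrow> 'b \<Rightarrow> 'b" and phi0 :: "'a \<Rightarrow> 'b"
    and pi :: "'a fps \<Rightarrow> 'a fps \<Rightarrow> 'a fps" and sig :: "'b fps \<Rightarrow> 'b fps \<Rightarrow> 'b fps"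
    and Phi :: "'a fps \<Rightarrow> 'b fps"
    and phi1 :: "('a \<Rightarrow> 'b) \<Rightarrow> 'b"
    and hor :: "('b \<Rightarrow> 'b) \<Rightarrow> ('b \<Rightarrow> 'b)"
  assumes algA: "k_algebra smA" and algB: "k_algebra smB"
    and pA: "poisson_bracket smA pi0" and pB: "poisson_bracket smB sig0"
    and m0: "poisson_morphism smA smB pi0 sig0 phi0"
    and pi_def: "poisson_bracket (fps_sm smA) pi"
    and pi_0: "\<forall>a b. fps_nth (pi (fps_const a) (fps_const b)) 0 = pi0 a b"
    and sigma_def: "poisson_bracket (fps_sm smB) sig"
    and sigma_0: "\<forall>a b. fps_nth (sig (fps_const a) (fps_const b)) 0 = sig0 a b"
    and Phi_mor: "poisson_morphism (fps_sm smA) (fps_sm smB) pi sig Phi"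
    and Phi_0: "\<forall>a. fps_nth (Phi (fps_const a)) 0 = phi0 a"
    and h1_add: "\<forall>D\<in>CE1_der smA smB phi0. \<forall>E\<in>CE1_der smA smB phi0.
                   phi1 (\<lambda>x. D x + E x) = phi1 D + phi1 E"
    and h1_mult: "\<forall>D\<in>CE1_der smA smB phi0. \<forall>b\<in>poisson_commutant sig0 phi0. phi1 (\<lambda>x. b * D x) = b * phi1 D"
    and h1_homot: "\<forall>D\<in>CE1_der smA smB phi0.
                     ce_delta1 pi0 sig0 phi0 D = (\<lambda>_ _. 0) \<longrightarrow> D = ce_delta0 sig0 phi0 (phi1 D)"
    and h2_der: "\<forall>D\<in>CE1_der_sub smB (poisson_commutant sig0 phi0). derivation smB (hor D)"
    and h2_add: "\<forall>D\<in>CE1_der_sub smB (poisson_commutant sig0 phi0). \<forall>E\<in>CE1_der_sub smB (poisson_commutant sig0 phi0).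
                   hor (\<lambda>x. D x + E x) = (\<lambda>y. hor D y + hor E y)"
    and h2_mult: "\<forall>D\<in>CE1_der_sub smB (poisson_commutant sig0 phi0). \<forall>b\<in>poisson_commutant sig0 phi0. hor (\<lambda>x. b * D x) = (\<lambda>y. b * hor D y)"
    and h2_ext: "\<forall>D\<in>CE1_der_sub smB (poisson_commutant sig0 phi0). \<forall>a'\<in>poisson_commutant sig0 phi0. hor D a' = D a'"
begin

abbreviation "Ap \<equiv> poisson_commutant sig0 phi0"

sublocale S: fbr smB sig
  by unfold_locales (rule algB, rule sigma_def)

lemma sig0_bil_r: "sig0 x (y + z) = sig0 x y + sig0 x z"
  using pB unfolding poisson_bracket_def k_bilinear_def k_linear_def by blast
lemma sig0_bil_l: "sig0 (y + z) x = sig0 y x + sig0 z x"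
  using pB unfolding poisson_bracket_def k_bilinear_def k_linear_def by blast
lemma sig0_sm_r: "sig0 x (smB c y) = smB c (sig0 x y)"
  using pB unfolding poisson_bracket_def k_bilinear_def k_linear_def by blast
lemma sig0_anti: "sig0 x y = - sig0 y x"
  using pB unfolding poisson_bracket_def by blast
lemma sig0_leib: "sig0 x (y * z) = sig0 x y * z + y * sig0 x z"
  using pB unfolding poisson_bracket_def by blast

lemma Ap_add: "x \<in> Ap \<Longrightarrow> y \<in> Ap \<Longrightarrow> x + y \<in> Ap"
  unfolding poisson_commutant_def by (simp add: sig0_bil_r)
lemma Ap_mult: "x \<in> Ap \<Longrightarrow> y \<in> Ap \<Longrightarrow> x * y \<in> Ap"
  unfolding poisson_commutant_def by (simp add: sig0_leib)
lemma Ap_sm: "x \<in> Ap \<Longrightarrow> smB c x \<in> Ap"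
  unfolding poisson_commutant_def by (simp add: sig0_sm_r ka_zero_right[OF algB])
lemma Ap_one: "1 \<in> Ap"
  unfolding poisson_commutant_def using sig0_leib[of _ 1 1] by simp
lemma Ap_sm1: "smB c 1 \<in> Ap"
  by (rule Ap_sm[OF Ap_one])

lemma Phi_add: "Phi (f + g) = Phi f + Phi g"
  using Phi_mor unfolding poisson_morphism_def k_linear_def by blast
lemma Phi_sm: "Phi (fps_sm smA c f) = fps_sm smB c (Phi f)"
  using Phi_mor unfolding poisson_morphism_def k_linear_def by blast
lemma Phi_mult: "Phi (f * g) = Phi f * Phi g"
  using Phi_mor unfolding poisson_morphism_def by blast
lemma Phi_br: "Phi (pi f g) = sig (Phi f) (Phi g)"
  using Phi_mor unfolding poisson_morphism_def by blast
lemma Phi_X: "Phi (fps_X * f) = fps_X * Phi f"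
proof -
  have "Phi (fps_sm smA (fps_X ^ 1) f) = fps_sm smB (fps_X ^ 1) (Phi f)" by (rule Phi_sm)
  then show ?thesis using fps_sm_X_pow[OF algA, of 1 f] fps_sm_X_pow[OF algB, of 1 "Phi f"] by simp
qed
lemma Phi_nth0: "Phi g \<section> 0 = phi0 (g \<section> 0)"
proof -
  have "Phi g = Phi (fps_const (g \<section> 0)) + fps_X * Phi (fps_shift 1 g)"
    using fps_decomp1[of g] by (metis Phi_add Phi_X)
  then show ?thesis using Phi_0 by simp
qed

lemma sig_nth0: "sig G H \<section> 0 = sig0 (G \<section> 0) (H \<section> 0)"
  using S.nth0 sigma_0 by simp

lemma LO_r:
  assumes "\<And>k. k < N \<Longrightarrow> P \<section> k = 0"
  shows "sig G P \<section> N = sig0 (G \<section> 0) (P \<section> N)"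
proof -
  have "P = fps_X ^ N * fps_shift N P" by (rule fps_decomp_low) (use assms in auto)
  then have "sig G P = fps_X ^ N * sig G (fps_shift N P)" by (metis S.Xp_r)
  then have "sig G P \<section> N = sig G (fps_shift N P) \<section> 0" by (simp add: fps_X_power_mult_nth)
  then show ?thesis by (simp add: sig_nth0)
qed

lemma LO_l:
  assumes "\<And>k. k < N \<Longrightarrow> P \<section> k = 0"
  shows "sig P G \<section> N = sig0 (P \<section> N) (G \<section> 0)"
  using LO_r[where G=G, OF assms] S.antisym[of P G] sig0_anti[of "P \<section> N"] by simp

lemma Ext:
  assumes "\<And>a k. k < N \<Longrightarrow> sig F (Phi (fps_const a)) \<section> k = 0"
  shows "k < N \<Longrightarrow> sig F (Phi g) \<section> k = 0"
  using assms
proof (induction N arbitrary: g k F)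
  case 0 then show ?case by simp
next
  case (Suc N)
  have "sig F (Phi g) = sig F (Phi (fps_const (g \<section> 0))) + fps_X * sig F (Phi (fps_shift 1 g))"
    using fps_decomp1[of g] by (metis Phi_add Phi_X S.add_r S.X_r)
  moreover have "(fps_X * sig F (Phi (fps_shift 1 g))) \<section> k = 0"
  proof (cases k)
    case (Suc k')
    then have "sig F (Phi (fps_shift 1 g)) \<section> k' = 0"
      using Suc.IH[of k' F] Suc.prems by auto
    then show ?thesis using Suc by simp
  qed simp
  ultimately show ?case using Suc.prems by simp
qed

end



context derseq begin

lemma D_const_killed:
  assumes "\<And>k. X k b = 0"
  shows "op_apply X (fps_const b) = 0"
  by (rule fps_ext) (simp add: op_apply_nth, rule sum.neutral, simp add: assms Xz)

lemma Dm_const_killed: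
  assumes "\<And>k. X k b = 0"
  shows "((op_apply X) ^^ Suc m) (fps_const b) = 0"
  by (induction m) (simp_all add: D_const_killed[OF assms] D_zero)

lemma E_const_killed:
  assumes ka: "k_algebra sm" and kill: "\<And>k. X k b = 0"
  shows "op_exp sm X (fps_const b) = fps_const b"
proof (rule fps_ext)
  fix n
  have "op_exp sm X (fps_const b) \<section> n = (\<Sum>m\<in>{0}. sm (1 / fact m) (((op_apply X) ^^ m) (fps_const b) \<section> n))"
    unfolding op_exp_nth
  proof (rule sum.mono_neutral_right)
    show "\<forall>i\<in>{..n} - {0}. sm (1 / fact i) (((op_apply X) ^^ i) (fps_const b) \<section> n) = 0"
    proof
      fix i assume "i \<in> {..n} - {0}"
      then obtain i' where "i = Suc i'" by (cases i) auto
      then show "sm (1 / fact i) (((op_apply X) ^^ i) (fps_const b) \<section> n) = 0"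
        using Dm_const_killed[OF kill] by (simp add: ka_zero_right[OF ka])
    qed
  qed auto
  then show "op_exp sm X (fps_const b) \<section> n = fps_const b \<section> n"
    using ka by (simp add: k_algebra_def)
qed

end

context mainctx begin

definition Dfun :: "(nat \<Rightarrow> 'b \<Rightarrow> 'b) \<Rightarrow> nat \<Rightarrow> 'b \<Rightarrow> 'a \<Rightarrow> 'b" where
  "Dfun Y n x = (\<lambda>a. sig (op_exp smB Y (fps_const x)) (Phi (fps_const a)) \<section> Suc n)"

definition Mfun :: "(nat \<Rightarrow> 'b \<Rightarrow> 'b) \<Rightarrow> nat \<Rightarrow> 'b \<Rightarrow> 'b" where
  "Mfun Y n = (\<lambda>x. if x \<in> Ap then phi1 (Dfun Y n x) else 0)"

lemma CE_scal: "D \<in> CE1_der smA smB phi0 \<Longrightarrow> (\<lambda>a. b * D a) \<in> CE1_der smA smB phi0"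
  unfolding CE1_der_def k_linear_def
  by (auto simp: distrib_left ka_one[OF algB, of _ "b * _"] ka_one[OF algB, of _ "D _"] algebra_simps)

lemma CE_add: "D \<in> CE1_der smA smB phi0 \<Longrightarrow> E \<in> CE1_der smA smB phi0 \<Longrightarrow>
   (\<lambda>a. D a + E a) \<in> CE1_der smA smB phi0"
  unfolding CE1_der_def k_linear_def
  by (auto simp: ka_add[OF algB] algebra_simps)

lemma fps_const_sm1: "fps_const (smB c 1) = fps_sm smB (fps_const c) 1"
  by (rule fps_ext) (simp add: fps_sm_const[OF algB] ka_zero_right[OF algB])

lemma sig_one: "sig G 1 = 0"
  using S.leibniz[of G 1 1] by simp

lemma sig_const_sm1: "sig G (fps_const (smB c 1)) = 0"
proof -
  have "sig G (fps_const (smB c 1)) = fps_sm smB (fps_const c) 0"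
    unfolding fps_const_sm1 S.sm_r sig_one ..
  also have "\<dots> = 0"
    by (rule fps_ext) (simp add: fps_sm_const[OF algB] ka_zero_right[OF algB])
  finally show ?thesis .
qed

lemma sig_const_sm1_mult: "sig (fps_const (smB c 1) * F) G = fps_const (smB c 1) * sig F G"
proof -
  have "sig (fps_const (smB c 1) * F) G = - sig G (fps_const (smB c 1) * F)"
    by (rule S.antisym)
  also have "\<dots> = - (fps_const (smB c 1) * sig G F)"
    by (simp add: S.leibniz sig_const_sm1)
  also have "\<dots> = fps_const (smB c 1) * sig F G"
    using S.antisym[of G F] by simp
  finally show ?thesis .
qed

context
  fixes Y :: "nat \<Rightarrow> 'b \<Rightarrow> 'b" and n :: nat
  assumes Y0: "Y 0 = (\<lambda>_. 0)" and Yder: "\<And>k. derivation smB (Y k)"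
    and van: "\<And>x a k. x \<in> Ap \<Longrightarrow> k \<le> n \<Longrightarrow>
               sig (op_exp smB Y (fps_const x)) (Phi (fps_const a)) \<section> k = 0"
begin

interpretation Yd: derseq Y
  by (rule derseq_intro[where X=Y and sm=smB, OF Y0 Yder])

abbreviation "EE x \<equiv> op_exp smB Y (fps_const x)"

lemma F_van: "x \<in> Ap \<Longrightarrow> k \<le> n \<Longrightarrow> sig (EE x) (Phi g) \<section> k = 0"
  by (rule Ext[where N="Suc n"]) (auto intro: van)

lemma F_van': "x \<in> Ap \<Longrightarrow> k \<le> n \<Longrightarrow> sig (Phi g) (EE x) \<section> k = 0"
  using F_van S.antisym[of "Phi g" "EE x"] by simp

lemma EE0: "EE x \<section> 0 = x"
  using E_0[OF algB] by simp

lemma D_CE: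
  assumes x: "x \<in> Ap"
  shows "Dfun Y n x \<in> CE1_der smA smB phi0"
proof -
  let ?F = "EE x"
  have add: "Dfun Y n x (a + b) = Dfun Y n x a + Dfun Y n x b" for a b
  proof -
    have "Phi (fps_const (a + b)) = Phi (fps_const a) + Phi (fps_const b)"
      by (simp add: Phi_add[symmetric])
    then show ?thesis unfolding Dfun_def by (simp add: S.add_r)
  qed
  have sm: "Dfun Y n x (smA c a) = smB c (Dfun Y n x a)" for c a
  proof -
    have "Phi (fps_const (smA c a)) = fps_sm smB (fps_const c) (Phi (fps_const a))"
      by (simp add: fps_sm_const_const[OF algA, symmetric] Phi_sm)
    then have "sig ?F (Phi (fps_const (smA c a))) = fps_sm smB (fps_const c) (sig ?F (Phi (fps_const a)))"
      by (simp only: S.sm_r)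
    then show ?thesis unfolding Dfun_def by (simp add: fps_sm_const[OF algB])
  qed
  have mul: "Dfun Y n x (a * b) = phi0 a * Dfun Y n x b + phi0 b * Dfun Y n x a" for a b
  proof -
    have "Phi (fps_const (a * b)) = Phi (fps_const a) * Phi (fps_const b)"
      by (simp add: Phi_mult[symmetric])
    then have "sig ?F (Phi (fps_const (a * b))) =
       sig ?F (Phi (fps_const a)) * Phi (fps_const b) + Phi (fps_const a) * sig ?F (Phi (fps_const b))"
      by (simp add: S.leibniz)
    moreover have "(sig ?F (Phi (fps_const a)) * Phi (fps_const b)) \<section> Suc n =
        sig ?F (Phi (fps_const a)) \<section> Suc n * phi0 b"
      using low_mult_l[of n "sig ?F (Phi (fps_const a))" "Phi (fps_const b)"] F_van[OF x]
      by (simp add: Phi_nth0)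
    moreover have "(Phi (fps_const a) * sig ?F (Phi (fps_const b))) \<section> Suc n =
        phi0 a * sig ?F (Phi (fps_const b)) \<section> Suc n"
      using low_mult_r[of n "sig ?F (Phi (fps_const b))" "Phi (fps_const a)"] F_van[OF x]
      by (simp add: Phi_nth0)
    ultimately show ?thesis unfolding Dfun_def by (simp add: algebra_simps)
  qed
  show ?thesis unfolding CE1_der_def k_linear_def using add sm mul by blast
qed

lemma D_cocycle:
  assumes x: "x \<in> Ap"
  shows "ce_delta1 pi0 sig0 phi0 (Dfun Y n x) = (\<lambda>_ _. 0)"
proof (intro ext)
  fix a0 a1
  let ?F = "EE x" and ?G0 = "Phi (fps_const a0)" and ?G1 = "Phi (fps_const a1)"
  let ?D = "Dfun Y n x"
  have J: "sig ?G0 (sig ?G1 ?F) + sig ?G1 (sig ?F ?G0) + sig ?F (sig ?G0 ?G1) = 0"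
    by (rule S.jacobi)
  have t1: "sig ?G0 (sig ?G1 ?F) \<section> Suc n = - sig0 (phi0 a0) (?D a1)"
  proof -
    have "sig ?G0 (sig ?G1 ?F) = - sig ?G0 (sig ?F ?G1)"
      using S.antisym[of ?G1 ?F] S.neg_r by metis
    moreover have "sig ?G0 (sig ?F ?G1) \<section> Suc n = sig0 (phi0 a0) (?D a1)"
      by (subst LO_r) (use F_van[OF x] in \<open>auto simp: Phi_nth0 Dfun_def\<close>)
    ultimately show ?thesis by simp
  qed
  have t2: "sig ?G1 (sig ?F ?G0) \<section> Suc n = sig0 (phi0 a1) (?D a0)"
    by (subst LO_r) (use F_van[OF x] in \<open>auto simp: Phi_nth0 Dfun_def\<close>)
  have t3: "sig ?F (sig ?G0 ?G1) \<section> Suc n = ?D (pi0 a0 a1)"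
  proof -
    let ?p = "pi (fps_const a0) (fps_const a1)"
    have "sig ?G0 ?G1 = Phi ?p" by (simp add: Phi_br)
    also have "\<dots> = Phi (fps_const (pi0 a0 a1)) + fps_X * Phi (fps_shift 1 ?p)"
      using fps_decomp1[of ?p] pi_0 by (metis Phi_add Phi_X)
    finally have "sig ?F (sig ?G0 ?G1) = sig ?F (Phi (fps_const (pi0 a0 a1))) + fps_X * sig ?F (Phi (fps_shift 1 ?p))"
      by (simp add: S.add_r S.X_r)
    then show ?thesis using F_van[OF x, of n] by (simp add: Dfun_def)
  qed
  have "(sig ?G0 (sig ?G1 ?F) + sig ?G1 (sig ?F ?G0) + sig ?F (sig ?G0 ?G1)) \<section> Suc n = 0"
    using J by simp
  then have "- sig0 (phi0 a0) (?D a1) + sig0 (phi0 a1) (?D a0) + ?D (pi0 a0 a1) = 0"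
    using t1 t2 t3 by simp
  then show "ce_delta1 pi0 sig0 phi0 ?D a0 a1 = 0"
    unfolding ce_delta1_def by (simp add: algebra_simps)
qed

lemma D_hom:
  assumes x: "x \<in> Ap"
  shows "Dfun Y n x a = sig0 (phi0 a) (phi1 (Dfun Y n x))"
proof -
  have "Dfun Y n x = ce_delta0 sig0 phi0 (phi1 (Dfun Y n x))"
    using h1_homot D_CE[OF x] D_cocycle[OF x] by blast
  then show ?thesis unfolding ce_delta0_def by metis
qed

lemma D_addx: "Dfun Y n (x + y) = (\<lambda>a. Dfun Y n x a + Dfun Y n y a)"
  unfolding Dfun_def
  by (simp add: fps_const_add[symmetric] Yd.E_add[OF algB] S.add_l del: fps_const_add)

lemma D_smx: "Dfun Y n (smB c x) = (\<lambda>a. smB c 1 * Dfun Y n x a)"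
proof -
  have kill: "Y k (smB c 1) = 0" for k using derivation_scal1[OF algB Yder] .
  have "EE (smB c x) = EE (smB c 1 * x)" using ka_one[OF algB, of c x] by simp
  also have "\<dots> = fps_const (smB c 1) * EE x"
    by (simp add: fps_const_mult[symmetric] Yd.E_mult[OF algB] Yd.E_const_killed[OF algB kill] del: fps_const_mult)
  finally show ?thesis unfolding Dfun_def by (simp add: sig_const_sm1_mult)
qed

lemma D_multx:
  assumes x: "x \<in> Ap" and y: "y \<in> Ap"
  shows "Dfun Y n (x * y) = (\<lambda>a. x * Dfun Y n y a + y * Dfun Y n x a)"
proof
  fix a
  let ?G = "Phi (fps_const a)"
  have "EE (x * y) = EE x * EE y"
    by (simp add: fps_const_mult[symmetric] Yd.E_mult[OF algB] del: fps_const_mult)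
  then have "sig (EE (x * y)) ?G = - sig ?G (EE x * EE y)"
    using S.antisym by metis
  also have "\<dots> = sig (EE x) ?G * EE y + EE x * sig (EE y) ?G"
    using S.antisym[of ?G "EE x"] S.antisym[of ?G "EE y"] by (simp add: S.leibniz)
  finally have e: "sig (EE (x * y)) ?G = sig (EE x) ?G * EE y + EE x * sig (EE y) ?G" .
  have "(sig (EE x) ?G * EE y) \<section> Suc n = sig (EE x) ?G \<section> Suc n * y"
    using low_mult_l[of n "sig (EE x) ?G" "EE y"] F_van[OF x] EE0 by simp
  moreover have "(EE x * sig (EE y) ?G) \<section> Suc n = x * sig (EE y) ?G \<section> Suc n"
    using low_mult_r[of n "sig (EE y) ?G" "EE x"] F_van[OF y] EE0 by simp
  ultimately show "Dfun Y n (x * y) a = x * Dfun Y n y a + y * Dfun Y n x a"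
    unfolding Dfun_def e by (simp add: algebra_simps)
qed

lemma M_sub: "Mfun Y n \<in> CE1_der_sub smB Ap"
proof -
  have i: "Mfun Y n (x + y) = Mfun Y n x + Mfun Y n y" if "x \<in> Ap" "y \<in> Ap" for x y
    using that h1_add D_CE[OF that(1)] D_CE[OF that(2)]
    by (simp add: Mfun_def Ap_add D_addx)
  have ii: "Mfun Y n (smB c x) = smB c (Mfun Y n x)" if "x \<in> Ap" for c x
  proof -
    have "phi1 (\<lambda>a. smB c 1 * Dfun Y n x a) = smB c 1 * phi1 (Dfun Y n x)"
      using h1_mult D_CE[OF that] Ap_sm1 by blast
    then show ?thesis using that
      by (simp add: Mfun_def Ap_sm D_smx ka_one[OF algB, of c "phi1 _"])
  qed
  have iii: "Mfun Y n (x * y) = x * Mfun Y n y + y * Mfun Y n x" if "x \<in> Ap" "y \<in> Ap" for x y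
  proof -
    have c1: "(\<lambda>a. x * Dfun Y n y a) \<in> CE1_der smA smB phi0" by (rule CE_scal[OF D_CE[OF that(2)]])
    have c2: "(\<lambda>a. y * Dfun Y n x a) \<in> CE1_der smA smB phi0" by (rule CE_scal[OF D_CE[OF that(1)]])
    have "phi1 (\<lambda>a. x * Dfun Y n y a + y * Dfun Y n x a) =
          phi1 (\<lambda>a. x * Dfun Y n y a) + phi1 (\<lambda>a. y * Dfun Y n x a)"
      using h1_add[rule_format, OF c1 c2] by simp
    also have "\<dots> = x * phi1 (Dfun Y n y) + y * phi1 (Dfun Y n x)"
      using h1_mult D_CE[OF that(1)] D_CE[OF that(2)] that by simp
    finally show ?thesis using that by (simp add: Mfun_def Ap_mult D_multx)
  qed
  show ?thesis unfolding CE1_der_sub_def using i ii iii by (auto simp: Mfun_def)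
qed

end

end



context mainctx begin

primrec seq :: "nat \<Rightarrow> nat \<Rightarrow> 'b \<Rightarrow> 'b" where
  "seq 0 = (\<lambda>_ _. 0)"
| "seq (Suc n) = (seq n)(Suc n := hor (Mfun (seq n) n))"

lemma seq_0: "seq n 0 = (\<lambda>_. 0)"
  by (induction n) auto

lemma seq_above: "n < j \<Longrightarrow> seq n j = (\<lambda>_. 0)"
  by (induction n) auto

lemma seq_stable: "j \<le> n \<Longrightarrow> seq (n + d) j = seq n j"
  by (induction d) auto

definition Inv :: "nat \<Rightarrow> bool" where
  "Inv n \<longleftrightarrow> (\<forall>k. derivation smB (seq n k)) \<and>
     (\<forall>x a k. x \<in> Ap \<longrightarrow> k \<le> n \<longrightarrow> sig (op_exp smB (seq n) (fps_const x)) (Phi (fps_const a)) \<section> k = 0)"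

lemma Inv_0: "Inv 0"
  unfolding Inv_def
proof (intro conjI allI impI)
  show "derivation smB (seq 0 k)" for k by (simp add: derivation_zero[OF algB])
  fix x a k assume x: "x \<in> Ap" and "k \<le> (0::nat)"
  then have "k = 0" by simp
  have "sig (op_exp smB (seq 0) (fps_const x)) (Phi (fps_const a)) \<section> 0 = sig0 x (phi0 a)"
    by (simp add: sig_nth0 E_0[OF algB] Phi_nth0)
  also have "\<dots> = 0" using x sig0_anti[of x "phi0 a"] unfolding poisson_commutant_def by simp
  finally show "sig (op_exp smB (seq 0) (fps_const x)) (Phi (fps_const a)) \<section> k = 0"
    using \<open>k = 0\<close> by simp
qed

lemma Inv_Suc:
  assumes I: "Inv n"
  shows "Inv (Suc n)"
proof -
  let ?Y = "seq n" and ?Y' = "seq (Suc n)"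
  have Yder: "\<And>k. derivation smB (?Y k)" using I unfolding Inv_def by blast
  have van: "\<And>x a k. x \<in> Ap \<Longrightarrow> k \<le> n \<Longrightarrow>
               sig (op_exp smB ?Y (fps_const x)) (Phi (fps_const a)) \<section> k = 0"
    using I unfolding Inv_def by blast
  have Msub: "Mfun ?Y n \<in> CE1_der_sub smB Ap"
    by (rule M_sub[OF seq_0 Yder van])
  have hder: "derivation smB (hor (Mfun ?Y n))" using h2_der Msub by blast
  have Yder': "derivation smB (?Y' k)" for k using Yder hder by simp
  have Yz: "?Y k 0 = 0" for k using derivation_add[OF Yder[of k], of 0 0] by simp
  have Yz': "?Y' k 0 = 0" for k using derivation_add[OF Yder'[of k], of 0 0] by simp
  have van': "sig (op_exp smB ?Y' (fps_const x)) (Phi (fps_const a)) \<section> k = 0"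
    if x: "x \<in> Ap" and k: "k \<le> Suc n" for x a k
  proof -
    let ?F = "op_exp smB ?Y (fps_const x)" and ?F' = "op_exp smB ?Y' (fps_const x)"
    let ?G = "Phi (fps_const a)"
    have agree: "?F' \<section> j = ?F \<section> j" if "j \<le> n" for j
      by (rule E_loc[where N=n]) (use that in auto)
    show ?thesis
    proof (cases "k \<le> n")
      case True
      have "sig ?F' ?G \<section> k = sig ?F ?G \<section> k"
        by (rule S.cong_l[where N="Suc n"]) (use agree True in auto)
      then show ?thesis using van[OF x True] by simp
    next
      case False
      then have kk: "k = Suc n" using k by simp
      let ?b = "phi1 (Dfun ?Y n x)"
      have inc: "?F' \<section> Suc n = ?F \<section> Suc n - ?Y (Suc n) (fps_const x \<section> 0) + ?Y' (Suc n) (fps_const x \<section> 0)"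
        by (rule E_inc[where X="seq n" and Y="seq (Suc n)" and N="Suc n", OF algB seq_0 Yz seq_0 Yz']) auto
      have hx: "hor (Mfun ?Y n) x = ?b"
        using h2_ext Msub x by (simp add: Mfun_def)
      have inc': "?F' \<section> Suc n = ?F \<section> Suc n + ?b"
        using inc seq_above[of n "Suc n"] hx by simp
      let ?H = "?F + fps_X ^ Suc n * fps_const ?b"
      have Hag: "?F' \<section> j = ?H \<section> j" if "j < Suc (Suc n)" for j
      proof (cases "j \<le> n")
        case True then show ?thesis using agree[OF True] True by (auto simp: fps_X_power_mult_nth)
      next
        case False then have "j = Suc n" using that by simp
        then show ?thesis using inc' by (simp add: fps_X_power_mult_nth)
      qed
      have "sig ?F' ?G \<section> Suc n = sig ?H ?G \<section> Suc n"
        by (rule S.cong_l[where N="Suc (Suc n)"]) (use Hag in auto)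
      also have "\<dots> = sig ?F ?G \<section> Suc n + sig (fps_const ?b) ?G \<section> 0"
        by (simp only: S.add_l S.Xp_l fps_add_nth fps_X_power_mult_nth) simp
      also have "\<dots> = sig0 (phi0 a) ?b + sig0 ?b (phi0 a)"
        using D_hom[where a=a, OF seq_0 Yder van x] by (simp add: Dfun_def sig_nth0 Phi_nth0)
      also have "\<dots> = 0" using sig0_anti[of ?b "phi0 a"] by simp
      finally show ?thesis using kk by simp
    qed
  qed
  show ?thesis unfolding Inv_def using Yder' van' by blast
qed

lemma Inv_all: "Inv n"
  by (induction n) (auto intro: Inv_0 Inv_Suc)

definition XX :: "nat \<Rightarrow> 'b \<Rightarrow> 'b" where "XX k = seq k k"

lemma XX_seq: "j \<le> n \<Longrightarrow> XX j = seq n j"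
  unfolding XX_def using seq_stable[of j j "n - j"] by simp

lemma XX_der: "derivation smB (XX k)"
  using Inv_all[of k] unfolding Inv_def XX_def by blast

lemma XX_0: "XX 0 = (\<lambda>_. 0)"
  unfolding XX_def by (simp add: seq_0)

lemma XX_const: "x \<in> Ap \<Longrightarrow> sig (op_exp smB XX (fps_const x)) (Phi g) \<section> k = 0"
proof -
  assume x: "x \<in> Ap"
  have agree: "op_exp smB XX (fps_const x) \<section> j = op_exp smB (seq k) (fps_const x) \<section> j" if "j \<le> k" for j
    by (rule E_loc[where N=k]) (use that XX_seq in auto)
  have "sig (op_exp smB XX (fps_const x)) (Phi g) \<section> k = sig (op_exp smB (seq k) (fps_const x)) (Phi g) \<section> k"
    by (rule S.cong_l[where N="Suc k"]) (use agree in auto)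
  also have "\<dots> = 0"
    by (rule Ext[where N="Suc k"]) (use Inv_all[of k] x in \<open>auto simp: Inv_def\<close>)
  finally show ?thesis .
qed

lemma XX_main:
  assumes "\<forall>n. f \<section> n \<in> Ap"
  shows "sig (op_exp smB XX f) (Phi g) = 0"
proof -
  interpret Xd: derseq XX by (rule derseq_intro[where X=XX and sm=smB, OF XX_0 XX_der])
  have "\<forall>f. (\<forall>n. f \<section> n \<in> Ap) \<longrightarrow> sig (op_exp smB XX f) (Phi g) \<section> k = 0" for k
  proof (induction k)
    case 0
    show ?case
    proof (intro allI impI)
      fix f :: "'b fps" assume "\<forall>n. f \<section> n \<in> Ap"
      have "op_exp smB XX f = op_exp smB XX (fps_const (f \<section> 0)) + fps_X * op_exp smB XX (fps_shift 1 f)"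
        using fps_decomp1[of f] by (metis Xd.E_add[OF algB] Xd.E_X[OF algB])
      then show "sig (op_exp smB XX f) (Phi g) \<section> 0 = 0"
        using XX_const \<open>\<forall>n. f \<section> n \<in> Ap\<close> by (simp add: S.add_l S.X_l)
    qed
  next
    case (Suc k)
    show ?case
    proof (intro allI impI)
      fix f :: "'b fps" assume f: "\<forall>n. f \<section> n \<in> Ap"
      have "op_exp smB XX f = op_exp smB XX (fps_const (f \<section> 0)) + fps_X * op_exp smB XX (fps_shift 1 f)"
        using fps_decomp1[of f] by (metis Xd.E_add[OF algB] Xd.E_X[OF algB])
      moreover have "\<forall>n. fps_shift 1 f \<section> n \<in> Ap" using f by simp
      ultimately show "sig (op_exp smB XX f) (Phi g) \<section> Suc k = 0"
        using XX_const f Suc.IH by (simp add: S.add_l S.X_l)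
    qed
  qed
  then show ?thesis using assms by (intro fps_ext) simp
qed

end


theorem proposition3p12:
  fixes smA :: "'k::field_char_0 \<Rightarrow> 'a::comm_ring_1 \<Rightarrow> 'a"
    and smB :: "'k \<Rightarrow> 'b::comm_ring_1 \<Rightarrow> 'b"
    and \<pi>0 :: "'a \<Rightarrow> 'a \<Rightarrow> 'a" and \<sigma>0 :: "'b \<Rightarrow> 'b \<Rightarrow> 'b" and \<phi>0 :: "'a \<Rightarrow> 'b"
    and \<pi> :: "'a fps \<Rightarrow> 'a fps \<Rightarrow> 'a fps" and \<sigma> :: "'b fps \<Rightarrow> 'b fps \<Rightarrow> 'b fps"
    and \<Phi> :: "'a fps \<Rightarrow> 'b fps"
    and \<phi>1 :: "('a \<Rightarrow> 'b) \<Rightarrow> 'b"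
    and hor :: "('b \<Rightarrow> 'b) \<Rightarrow> ('b \<Rightarrow> 'b)"
  defines "A' \<equiv> poisson_commutant \<sigma>0 \<phi>0"
  assumes algA: "k_algebra smA" and algB: "k_algebra smB"
    and pA: "poisson_bracket smA \<pi>0" and pB: "poisson_bracket smB \<sigma>0"
    and m0: "poisson_morphism smA smB \<pi>0 \<sigma>0 \<phi>0"
    and pi_def: "poisson_bracket (fps_sm smA) \<pi>"
    and pi_0: "\<forall>a b. fps_nth (\<pi> (fps_const a) (fps_const b)) 0 = \<pi>0 a b"
    and sigma_def: "poisson_bracket (fps_sm smB) \<sigma>"
    and sigma_0: "\<forall>a b. fps_nth (\<sigma> (fps_const a) (fps_const b)) 0 = \<sigma>0 a b"
    and Phi_mor: "poisson_morphism (fps_sm smA) (fps_sm smB) \<pi> \<sigma> \<Phi>"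
    and Phi_0: "\<forall>a. fps_nth (\<Phi> (fps_const a)) 0 = \<phi>0 a"
    and h1_add: "\<forall>D\<in>CE1_der smA smB \<phi>0. \<forall>E\<in>CE1_der smA smB \<phi>0.
                   \<phi>1 (\<lambda>x. D x + E x) = \<phi>1 D + \<phi>1 E"
    and h1_mult: "\<forall>D\<in>CE1_der smA smB \<phi>0. \<forall>b\<in>A'. \<phi>1 (\<lambda>x. b * D x) = b * \<phi>1 D"
    and h1_homot: "\<forall>D\<in>CE1_der smA smB \<phi>0.
                     ce_delta1 \<pi>0 \<sigma>0 \<phi>0 D = (\<lambda>_ _. 0) \<longrightarrow> D = ce_delta0 \<sigma>0 \<phi>0 (\<phi>1 D)"
    and h2_der: "\<forall>D\<in>CE1_der_sub smB A'. derivation smB (hor D)"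
    and h2_add: "\<forall>D\<in>CE1_der_sub smB A'. \<forall>E\<in>CE1_der_sub smB A'.
                   hor (\<lambda>x. D x + E x) = (\<lambda>y. hor D y + hor E y)"
    and h2_mult: "\<forall>D\<in>CE1_der_sub smB A'. \<forall>b\<in>A'. hor (\<lambda>x. b * D x) = (\<lambda>y. b * hor D y)"
    and h2_ext: "\<forall>D\<in>CE1_der_sub smB A'. \<forall>a'\<in>A'. hor D a' = D a'"
  shows "\<exists>X :: nat \<Rightarrow> 'b \<Rightarrow> 'b. X 0 = (\<lambda>_. 0) \<and> (\<forall>k. derivation smB (X k)) \<and>
           (\<forall>f g. (\<forall>n. fps_nth f n \<in> A') \<longrightarrow> \<sigma> (op_exp smB X f) (\<Phi> g) = 0)"
proof -
  have "mainctx smA smB \<pi>0 \<sigma>0 \<phi>0 \<pi> \<sigma> \<Phi> \<phi>1 hor"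
    unfolding mainctx_def
    using algA algB pA pB m0 pi_def pi_0 sigma_def sigma_0 Phi_mor Phi_0 h1_add h1_mult h1_homot
      h2_der h2_add h2_mult h2_ext
    unfolding A'_def by blast
  then interpret M: mainctx smA smB \<pi>0 \<sigma>0 \<phi>0 \<pi> \<sigma> \<Phi> \<phi>1 hor .
  show ?thesis
    using M.XX_0 M.XX_der M.XX_main unfolding A'_def by blast
qed

end
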